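(* Let $X$ be a topological space, let $d\ge 1$, let $k=\operatorname{coind}_{\mathbb{Z}/2}(\mathrm{Conf}_2(X))$, and assume $k\ge d-1$. Then every injective function $f\colon X\to\mathbb{R}^d$ (not assumed continuous) satisfies $\alpha(f)\ge c_{d-1,k}$.
   Context: $\mathrm{Conf}_2(X)=\{(x,y)\in X\times X: x\neq y\}$ with the subspace topology and the $\mathbb{Z}/2$-action swapping coordinates. For a $\mathbb{Z}/2$-space $Z$, $\operatorname{coind}_{\mathbb{Z}/2}(Z)$ is the largest integer $k\ge0$ such that there is a continuous $\mathbb{Z}/2$-equivariant map $S^k\to Z$ ($S^k$ with the antipodal action). Spheres carry the geodesic metric $d(u,v)=\arccos\langle u,v\rangle$. For a topological space $X$ and a metric space $Y$, $\delta(g)=\inf\{\delta\ge 0 : \text{for every } x\in X \text{ there is an open neighborhood } U_x \text{ of } x \text{ with } \operatorname{diam}(g(U_x))\le\delta\}$. For injective $f\colon X\to\mathbb{R}^d$, $\Phi_f(x,y)=\frac{f(x)-f(y)}{\|f(x)-f(y)\|}\in S^{d-1}$ and $\alpha(f)=\delta(\Phi_f)$. For a metric space $Y$ and $r\ge0$, $\mathrm{VR}(Y;r)$ is the Vietoris–Rips complex (simplices: finite subsets of diameter $\le r$), geometrically realized. For $k\ge n\ge0$, $c_{n,k}=\inf\{r\ge0:\text{there is a continuous } \mathbb{Z}/2\text{-equivariant map } S^k\to\mathrm{VR}(S^n;r)\}$, with $\mathbb{Z}/2$ acting on $\mathrm{VR}(S^n;r)$ via the antipodal map on vertices. *)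

theory Defs
  imports "HOL-Analysis.Analysis"
begin

text \<open>The sphere S^n is the library's nsphere n (points of type nat => real,
  coordinates 0..n, zero beyond n).  The antipodal map:\<close>

definition antipode :: "(nat \<Rightarrow> real) \<Rightarrow> (nat \<Rightarrow> real)" where
  "antipode x = (\<lambda>i. - x i)"

definition geo_dist :: "nat \<Rightarrow> (nat \<Rightarrow> real) \<Rightarrow> (nat \<Rightarrow> real) \<Rightarrow> real" where
  "geo_dist n u v = arccos (\<Sum>i\<le>n. u i * v i)"

definition Conf2 :: "'a topology \<Rightarrow> ('a \<times> 'a) topology" where
  "Conf2 X = subtopology (prod_topology X X)
     {(x, y). x \<in> topspace X \<and> y \<in> topspace X \<and> x \<noteq> y}"

definition swap2 :: "'a \<times> 'a \<Rightarrow> 'a \<times> 'a" where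
  "swap2 p = (snd p, fst p)"

definition equiv_map_to_Conf2 :: "'a topology \<Rightarrow> nat \<Rightarrow> bool" where
  "equiv_map_to_Conf2 X k \<longleftrightarrow>
     (\<exists>g. continuous_map (nsphere k) (Conf2 X) g \<and>
          (\<forall>x\<in>topspace (nsphere k). g (antipode x) = swap2 (g x)))"

definition is_coind_Conf2 :: "'a topology \<Rightarrow> nat \<Rightarrow> bool" where
  "is_coind_Conf2 X k \<longleftrightarrow>
     equiv_map_to_Conf2 X k \<and> (\<forall>j>k. \<not> equiv_map_to_Conf2 X j)"

definition delta_mod :: "'b topology \<Rightarrow> ('c \<Rightarrow> 'c \<Rightarrow> real) \<Rightarrow> ('b \<Rightarrow> 'c) \<Rightarrow> real" where
  "delta_mod T dm g = Inf {\<delta>. \<delta> \<ge> 0 \<and>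
     (\<forall>p\<in>topspace T. \<exists>U. openin T U \<and> p \<in> U \<and>
        (\<forall>a\<in>U. \<forall>b\<in>U. dm (g a) (g b) \<le> \<delta>))}"

text \<open>Points of R^d are functions nat => real vanishing from index d on.\<close>

definition eucl_norm :: "nat \<Rightarrow> (nat \<Rightarrow> real) \<Rightarrow> real" where
  "eucl_norm d v = sqrt (\<Sum>i<d. (v i)\<^sup>2)"

definition Phi :: "nat \<Rightarrow> ('a \<Rightarrow> nat \<Rightarrow> real) \<Rightarrow> 'a \<times> 'a \<Rightarrow> (nat \<Rightarrow> real)" where
  "Phi d f p = (\<lambda>i. (f (fst p) i - f (snd p) i) /
                     eucl_norm d (\<lambda>j. f (fst p) j - f (snd p) j))"

definition alpha :: "'a topology \<Rightarrow> nat \<Rightarrow> ('a \<Rightarrow> nat \<Rightarrow> real) \<Rightarrow> real" where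
  "alpha X d f = delta_mod (Conf2 X) (geo_dist (d - 1)) (Phi d f)"

text \<open>A point of the geometric realization is a finitely supported probability weight
  w on the vertex set S^n whose support is a simplex, i.e. has diameter <= r.\<close>

definition supp_w :: "((nat \<Rightarrow> real) \<Rightarrow> real) \<Rightarrow> (nat \<Rightarrow> real) set" where
  "supp_w w = {v. w v \<noteq> 0}"

definition vr_simplex :: "nat \<Rightarrow> real \<Rightarrow> (nat \<Rightarrow> real) set \<Rightarrow> bool" where
  "vr_simplex n r \<sigma> \<longleftrightarrow> finite \<sigma> \<and> \<sigma> \<noteq> {} \<and> \<sigma> \<subseteq> topspace (nsphere n) \<and>
     (\<forall>u\<in>\<sigma>. \<forall>v\<in>\<sigma>. geo_dist n u v \<le> r)"

definition vr_carrier :: "nat \<Rightarrow> real \<Rightarrow> ((nat \<Rightarrow> real) \<Rightarrow> real) set" where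
  "vr_carrier n r = {w. vr_simplex n r (supp_w w) \<and> (\<forall>v. w v \<ge> 0) \<and>
                        sum w (supp_w w) = 1}"

definition vr_cell :: "nat \<Rightarrow> real \<Rightarrow> (nat \<Rightarrow> real) set \<Rightarrow> ((nat \<Rightarrow> real) \<Rightarrow> real) set" where
  "vr_cell n r \<sigma> = {w \<in> vr_carrier n r. supp_w w \<subseteq> \<sigma>}"

text \<open>Weak (CW) topology: U is open iff U meets every closed simplex in a set that is open
  in the simplex's Euclidean topology (the product topology restricted to the simplex).\<close>

definition vr_open :: "nat \<Rightarrow> real \<Rightarrow> ((nat \<Rightarrow> real) \<Rightarrow> real) set \<Rightarrow> bool" where
  "vr_open n r U \<longleftrightarrow> U \<subseteq> vr_carrier n r \<and>
     (\<forall>\<sigma>. vr_simplex n r \<sigma> \<longrightarrow>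
        openin (subtopology (powertop_real UNIV) (vr_cell n r \<sigma>)) (U \<inter> vr_cell n r \<sigma>))"

lemma istopology_vr_open: "istopology (vr_open n r)"
  unfolding istopology_def
proof (intro conjI allI impI)
  fix S T assume "vr_open n r S" "vr_open n r T"
  then show "vr_open n r (S \<inter> T)"
    unfolding vr_open_def
  proof (intro conjI allI impI)
    fix \<sigma> assume s: "vr_simplex n r \<sigma>"
    have "S \<inter> T \<inter> vr_cell n r \<sigma> = (S \<inter> vr_cell n r \<sigma>) \<inter> (T \<inter> vr_cell n r \<sigma>)" by auto
    then show "openin (subtopology (powertop_real UNIV) (vr_cell n r \<sigma>)) (S \<inter> T \<inter> vr_cell n r \<sigma>)"
      using \<open>vr_open n r S\<close> \<open>vr_open n r T\<close> s by (simp add: vr_open_def openin_Int)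
  qed (use \<open>vr_open n r S\<close> in \<open>auto simp: vr_open_def\<close>)
next
  fix K assume K: "Ball K (vr_open n r)"
  show "vr_open n r (\<Union>K)"
    unfolding vr_open_def
  proof (intro conjI allI impI)
    show "\<Union>K \<subseteq> vr_carrier n r" using K by (auto simp: vr_open_def)
    fix \<sigma> assume s: "vr_simplex n r \<sigma>"
    have "\<Union>K \<inter> vr_cell n r \<sigma> = \<Union>((\<lambda>U. U \<inter> vr_cell n r \<sigma>) ` K)" by auto
    moreover have "openin (subtopology (powertop_real UNIV) (vr_cell n r \<sigma>)) (\<Union>((\<lambda>U. U \<inter> vr_cell n r \<sigma>) ` K))"
      using K s by (intro openin_Union) (auto simp: vr_open_def)
    ultimately show "openin (subtopology (powertop_real UNIV) (vr_cell n r \<sigma>)) (\<Union>K \<inter> vr_cell n r \<sigma>)"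
      by simp
  qed
qed

definition vr_top :: "nat \<Rightarrow> real \<Rightarrow> ((nat \<Rightarrow> real) \<Rightarrow> real) topology" where
  "vr_top n r = topology (vr_open n r)"

lemma openin_vr_top: "openin (vr_top n r) U \<longleftrightarrow> vr_open n r U"
  by (simp add: vr_top_def topology_inverse' istopology_vr_open)

definition vr_antipode :: "((nat \<Rightarrow> real) \<Rightarrow> real) \<Rightarrow> ((nat \<Rightarrow> real) \<Rightarrow> real)" where
  "vr_antipode w = (\<lambda>v. w (antipode v))"

definition c_const :: "nat \<Rightarrow> nat \<Rightarrow> real" where
  "c_const n k = Inf {r. r \<ge> 0 \<and>
     (\<exists>g. continuous_map (nsphere k) (vr_top n r) g \<and>
          (\<forall>x\<in>topspace (nsphere k). g (antipode x) = vr_antipode (g x)))}"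

end

theory Submission imports Defs begin

definition Sph :: "nat \<Rightarrow> (nat \<Rightarrow> real) set" where
  "Sph k = {x. (\<Sum>i\<le>k. x i ^ 2) = 1 \<and> (\<forall>i>k. x i = 0)}"

lemma nsphere_top: "nsphere k = top_of_set (Sph k)"
  by (simp add: nsphere Sph_def euclidean_product_topology)

lemma topspace_nsphere': "topspace (nsphere k) = Sph k"
  by (simp add: nsphere_top)

lemma compact_Sph: "compact (Sph k)"
proof -
  have c1: "compactin (powertop_real UNIV) (PiE UNIV (\<lambda>i. {-1..1::real}))"
    by (simp add: compactin_PiE)
  have sub: "Sph k \<subseteq> PiE UNIV (\<lambda>i. {-1..1::real})"
  proof
    fix x assume x: "x \<in> Sph k"
    have "\<bar>x i\<bar> \<le> 1" for i
    proof (cases "i \<le> k")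
      case True
      have "x i ^ 2 \<le> (\<Sum>j\<le>k. x j ^ 2)"
        using True by (intro member_le_sum) auto
      then have "x i ^ 2 \<le> 1" using x by (simp add: Sph_def)
      then show ?thesis by (simp add: abs_square_le_1)
    next
      case False then show ?thesis using x by (simp add: Sph_def)
    qed
    then show "x \<in> PiE UNIV (\<lambda>i. {-1..1::real})" by (auto simp: abs_le_iff)
  qed
  have cl: "closedin (powertop_real UNIV) (Sph k)"
  proof -
    have a: "closedin (powertop_real UNIV) {x \<in> topspace (powertop_real UNIV). (\<lambda>x. \<Sum>i\<le>k. x i ^ 2) x \<in> {1}}"
      by (rule closedin_continuous_map_preimage[where Y=euclideanreal]) (auto intro!: continuous_intros continuous_map_product_projection)
    have b: "closedin (powertop_real UNIV) {x \<in> topspace (powertop_real UNIV). (\<lambda>x. x i) x \<in> {0}}" for i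
      by (rule closedin_continuous_map_preimage[where Y=euclideanreal]) (auto intro!: continuous_intros continuous_map_product_projection)
    have "closedin (powertop_real UNIV) ({x \<in> topspace (powertop_real UNIV). (\<lambda>x. \<Sum>i\<le>k. x i ^ 2) x \<in> {1}} \<inter>
       (\<Inter>i\<in>{k<..}. {x \<in> topspace (powertop_real UNIV). (\<lambda>x. x i) x \<in> {0}}))"
      using a b by (intro closedin_Int closedin_Inter) auto
    moreover have "({x \<in> topspace (powertop_real UNIV). (\<lambda>x. \<Sum>i\<le>k. x i ^ 2) x \<in> {1}} \<inter>
       (\<Inter>i\<in>{k<..}. {x \<in> topspace (powertop_real UNIV). (\<lambda>x. x i) x \<in> {0}})) = Sph k"
      by (auto simp: Sph_def)
    ultimately show ?thesis by simp
  qed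
  have "compactin (powertop_real UNIV) (Sph k)"
    using closed_compactin[OF c1 sub cl] .
  then show ?thesis by (simp add: euclidean_product_topology)
qed

lemma antipode_Sph: "x \<in> Sph k \<Longrightarrow> antipode x \<in> Sph k"
  by (simp add: Sph_def antipode_def)

lemma antipode_antipode [simp]: "antipode (antipode x) = x"
  by (simp add: antipode_def)

lemma dist_antipode [simp]: "dist (antipode x) (antipode y) = dist x (y :: nat \<Rightarrow> real)"
  by (simp add: dist_fun_def antipode_def dist_minus)


lemma topspace_vr_top: "topspace (vr_top n r) = vr_carrier n r"
proof -
  have "vr_open n r (vr_carrier n r)"
    unfolding vr_open_def
  proof (intro conjI allI impI)
    fix \<sigma> assume "vr_simplex n r \<sigma>"
    have "vr_carrier n r \<inter> vr_cell n r \<sigma> = vr_cell n r \<sigma>" by (auto simp: vr_cell_def)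
    then show "openin (subtopology (powertop_real UNIV) (vr_cell n r \<sigma>)) (vr_carrier n r \<inter> vr_cell n r \<sigma>)"
      by (simp add: openin_subtopology_refl)
  qed simp
  then show ?thesis
    unfolding topspace_def openin_vr_top by (auto simp: vr_open_def)
qed

lemma cont_vr:
  assumes car: "\<And>x. x\<in>S \<Longrightarrow> h x \<in> vr_carrier n r"
    and co: "\<And>v. continuous_on S (\<lambda>x. h x v)"
    and loc: "\<And>x. x\<in>S \<Longrightarrow> \<exists>W \<tau>. open W \<and> x\<in>W \<and> vr_simplex n r \<tau> \<and> (\<forall>x'\<in>W\<inter>S. supp_w (h x') \<subseteq> \<tau>)"
  shows "continuous_map (top_of_set S) (vr_top n r) h"
  unfolding continuous_map_def
proof (intro conjI allI impI)
  show "h \<in> topspace (top_of_set S) \<rightarrow> topspace (vr_top n r)"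
    using car by (auto simp: topspace_vr_top)
  have hc: "continuous_map (top_of_set S) (powertop_real UNIV) h"
    using co by (simp add: continuous_map_componentwise_UNIV)
  fix U assume "openin (vr_top n r) U"
  then have U: "vr_open n r U" by (simp add: openin_vr_top)
  show "openin (top_of_set S) {x \<in> topspace (top_of_set S). h x \<in> U}"
    unfolding openin_subopen[of _ "{x \<in> topspace (top_of_set S). h x \<in> U}"]
  proof
    fix x assume x: "x \<in> {x \<in> topspace (top_of_set S). h x \<in> U}"
    then have xS: "x \<in> S" by simp
    obtain W \<tau> where W: "open W" "x \<in> W" "vr_simplex n r \<tau>" "\<forall>x'\<in>W\<inter>S. supp_w (h x') \<subseteq> \<tau>"
      using loc[OF xS] by blast
    have "openin (subtopology (powertop_real UNIV) (vr_cell n r \<tau>)) (U \<inter> vr_cell n r \<tau>)"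
      using U W(3) by (simp add: vr_open_def)
    then obtain Op where Op: "openin (powertop_real UNIV) Op" "U \<inter> vr_cell n r \<tau> = Op \<inter> vr_cell n r \<tau>"
      by (auto simp: openin_subtopology)
    define T where "T = {x' \<in> topspace (top_of_set S). h x' \<in> Op} \<inter> (W \<inter> S)"
    have "openin (top_of_set S) {x' \<in> topspace (top_of_set S). h x' \<in> Op}"
      using openin_continuous_map_preimage[OF hc Op(1)] .
    moreover have "openin (top_of_set S) (W \<inter> S)"
      using W(1) by (auto simp: openin_open)
    ultimately have "openin (top_of_set S) T" unfolding T_def by (rule openin_Int)
    moreover have "x \<in> T"
    proof -
      have "h x \<in> vr_cell n r \<tau>" using car[OF xS] W xS by (auto simp: vr_cell_def)
      then have "h x \<in> Op" using x Op(2) by blast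
      then show ?thesis using xS W(2) by (simp add: T_def)
    qed
    moreover have "T \<subseteq> {x \<in> topspace (top_of_set S). h x \<in> U}"
    proof
      fix y assume y: "y \<in> T"
      then have yS: "y \<in> S" and "h y \<in> Op" "y \<in> W" by (auto simp: T_def)
      moreover have "h y \<in> vr_cell n r \<tau>" using car[OF yS] W \<open>y \<in> W\<close> yS by (auto simp: vr_cell_def)
      ultimately have "h y \<in> U" using Op(2) by blast
      then show "y \<in> {x \<in> topspace (top_of_set S). h x \<in> U}" using yS by simp
    qed
    ultimately show "\<exists>T. openin (top_of_set S) T \<and> x \<in> T \<and> T \<subseteq> {x \<in> topspace (top_of_set S). h x \<in> U}"
      by blast
  qed
qed

lemma Phi_swap: "Phi d f (swap2 p) = antipode (Phi d f p)"
proof -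
  have "eucl_norm d (\<lambda>j. f (snd p) j - f (fst p) j) = eucl_norm d (\<lambda>j. f (fst p) j - f (snd p) j)"
    unfolding eucl_norm_def by (simp add: power2_commute)
  then show ?thesis
    by (simp add: Phi_def swap2_def antipode_def fun_eq_iff minus_divide_left)
qed

lemma Phi_Sph:
  assumes "d \<ge> 1" "a \<in> topspace X" "b \<in> topspace X" "a \<noteq> b"
    and van: "\<forall>x\<in>topspace X. \<forall>i\<ge>d. f x i = 0" and inj: "inj_on f (topspace X)"
  shows "Phi d f (a, b) \<in> Sph (d - 1)"
proof -
  define u where "u = (\<lambda>j. f a j - f b j)"
  have "f a \<noteq> f b" using inj assms(2-4) by (auto simp: inj_on_def)
  then obtain i where i: "f a i \<noteq> f b i" by auto
  have "i < d" using i van assms(2,3) by (metis not_le)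
  have pos: "(\<Sum>j<d. (u j)\<^sup>2) > 0"
  proof -
    have "(u i)\<^sup>2 > 0" using i by (simp add: u_def)
    moreover have "(u i)\<^sup>2 \<le> (\<Sum>j<d. (u j)\<^sup>2)" using \<open>i < d\<close> by (intro member_le_sum) auto
    ultimately show ?thesis by linarith
  qed
  have n2: "(eucl_norm d u)\<^sup>2 = (\<Sum>j<d. (u j)\<^sup>2)"
    unfolding eucl_norm_def by (simp add: sum_nonneg)
  have le: "{..d - Suc 0} = {..<d}" using assms(1) by auto
  have "(\<Sum>j\<le>d-1. (u j / eucl_norm d u)\<^sup>2) = (\<Sum>j<d. (u j)\<^sup>2) / (eucl_norm d u)\<^sup>2"
    by (simp add: le power_divide sum_divide_distrib)
  also have "\<dots> = 1" using n2 pos by simp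
  finally have "(\<Sum>j\<le>d-1. (u j / eucl_norm d u)\<^sup>2) = 1" .
  moreover have "\<forall>j>d-1. u j / eucl_norm d u = 0"
    using van assms(1,2,3) by (auto simp: u_def)
  ultimately show ?thesis
    by (simp add: Sph_def Phi_def u_def)
qed


lemma small_diam:
  fixes T :: "(nat \<Rightarrow> real) set"
  assumes "e > 0" "\<forall>y\<in>T. dist x y \<le> e/4"
  shows "diameter T < e"
proof (cases "T = {}")
  case True then show ?thesis using assms by simp
next
  case False
  have "(SUP (a,b)\<in>T\<times>T. dist a b) \<le> e/2"
  proof (rule cSUP_least)
    show "T \<times> T \<noteq> {}" using False by simp
    fix p assume "p \<in> T \<times> T"
    then obtain a b where ab: "p = (a,b)" "a \<in> T" "b \<in> T" by auto
    have "dist a b \<le> dist x a + dist x b" by (metis dist_commute dist_triangle)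
    moreover have "dist x a \<le> e/4" "dist x b \<le> e/4" using ab assms by auto
    ultimately show "(case p of (a, b) \<Rightarrow> dist a b) \<le> e / 2" using ab by simp
  qed
  then have "diameter T \<le> e/2" using False by (simp add: diameter_def)
  then show ?thesis using assms by simp
qed

lemma main_construct:
  fixes g :: "(nat \<Rightarrow> real) \<Rightarrow> 'a \<times> 'a" and X :: "'a topology"
  assumes d1: "d \<ge> 1"
    and van: "\<forall>x\<in>topspace X. \<forall>i\<ge>d. f x i = 0" and inj: "inj_on f (topspace X)"
    and gc: "continuous_map (nsphere k) (Conf2 X) g"
    and geq: "\<forall>x\<in>topspace (nsphere k). g (antipode x) = swap2 (g x)"
    and cov: "\<forall>p\<in>topspace (Conf2 X). \<exists>U. openin (Conf2 X) U \<and> p \<in> U \<and>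
        (\<forall>a\<in>U. \<forall>b\<in>U. geo_dist (d - 1) (Phi d f a) (Phi d f b) \<le> \<delta>)"
  shows "\<exists>h. continuous_map (nsphere k) (vr_top (d - 1) \<delta>) h \<and>
          (\<forall>x\<in>topspace (nsphere k). h (antipode x) = vr_antipode (h x))"
proof -
  define S where "S = Sph k"
  define P where "P = (\<lambda>y. Phi d f (g y))"
  have tC: "topspace (Conf2 X) = {(a, b). a \<in> topspace X \<and> b \<in> topspace X \<and> a \<noteq> b}"
    by (auto simp: Conf2_def topspace_subtopology topspace_prod_topology)
  have gS: "g y \<in> topspace (Conf2 X)" if "y \<in> S" for y
    using continuous_map_image_subset_topspace[OF gc] that by (auto simp: S_def topspace_nsphere')
  have Pin: "P y \<in> Sph (d - 1)" if yS: "y \<in> S" for y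
  proof -
    obtain a b where "g y = (a, b)" "a \<in> topspace X" "b \<in> topspace X" "a \<noteq> b"
      using gS[OF yS] tC by auto
    then show ?thesis using Phi_Sph[OF d1 _ _ _ van inj] by (simp add: P_def)
  qed
  have Pant: "P (antipode y) = antipode (P y)" if "y \<in> S" for y
    using geq that by (simp add: P_def S_def topspace_nsphere' Phi_swap)
  define \<C> where "\<C> = {V. open V \<and> (\<forall>a\<in>V\<inter>S. \<forall>b\<in>V\<inter>S. geo_dist (d - 1) (P a) (P b) \<le> \<delta>)}"
  have Scov: "S \<subseteq> \<Union>\<C>"
  proof
    fix x assume xS: "x \<in> S"
    obtain U where U: "openin (Conf2 X) U" "g x \<in> U"
      "\<forall>a\<in>U. \<forall>b\<in>U. geo_dist (d - 1) (Phi d f a) (Phi d f b) \<le> \<delta>"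
      using cov gS[OF xS] by blast
    have "openin (nsphere k) {y \<in> topspace (nsphere k). g y \<in> U}"
      using openin_continuous_map_preimage[OF gc U(1)] .
    then have "openin (top_of_set S) {y \<in> S. g y \<in> U}"
      by (simp add: nsphere_top S_def)
    then obtain V where V: "open V" "{y \<in> S. g y \<in> U} = S \<inter> V"
      by (auto simp: openin_open)
    have "V \<in> \<C>"
      unfolding \<C>_def using V U(3) by (auto simp: P_def)
    moreover have "x \<in> V" using V xS U(2) by blast
    ultimately show "x \<in> \<Union>\<C>" by blast
  qed
  have "compact S" by (simp add: S_def compact_Sph)
  have "{} \<in> \<C>" unfolding \<C>_def by simp
  then have Cne: "\<C> \<noteq> {}" by blast
  have Cop: "\<And>B. B \<in> \<C> \<Longrightarrow> open B" unfolding \<C>_def by blast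
  obtain e where e: "0 < e" "\<And>T. \<lbrakk>T \<subseteq> S; diameter T < e\<rbrakk> \<Longrightarrow> \<exists>B \<in> \<C>. T \<subseteq> B"
    using Lebesgue_number_lemma[OF \<open>compact S\<close> Cne Scov Cop] by blast
  have small: "geo_dist (d - 1) (P a) (P b) \<le> \<delta>"
    if TT: "T \<subseteq> S" "\<forall>y\<in>T. dist x y \<le> e/4" "a \<in> T" "b \<in> T" for T x a b
  proof -
    have "diameter T < e" using small_diam[OF e(1) TT(2)] .
    then obtain B where B: "B \<in> \<C>" "T \<subseteq> B" using e(2) TT(1) by blast
    have "a \<in> B \<inter> S" "b \<in> B \<inter> S" using B(2) TT by auto
    then show ?thesis using B(1) unfolding \<C>_def by blast
  qed
  have e4: "e/4 > 0" using e(1) by simp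
  obtain N0 where N0: "finite N0" "N0 \<subseteq> S" "S \<subseteq> (\<Union>x\<in>N0. ball x (e/4))"
    using seq_compact_imp_totally_bounded[OF compact_imp_seq_compact[OF \<open>compact S\<close>], rule_format, OF e4] by blast
  define N where "N = N0 \<union> antipode ` N0"
  have Nfin: "finite N" using N0 by (simp add: N_def)
  have NS: "N \<subseteq> S" using N0 antipode_Sph by (auto simp: N_def S_def)
  have Nant: "antipode ` N = N"
    by (auto simp: N_def image_Un image_image)
  have injA: "inj_on antipode A" for A
    by (metis antipode_antipode inj_on_inverseI)
  define lam where "lam = (\<lambda>(y::nat\<Rightarrow>real) (x::nat\<Rightarrow>real). max 0 (e/4 - dist x y))"
  define Wt where "Wt = (\<lambda>x. \<Sum>y\<in>N. lam y x)"
  define num where "num = (\<lambda>x v. \<Sum>y\<in>{y\<in>N. P y = v}. lam y x)"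
  define h where "h = (\<lambda>x v. num x v / Wt x)"
  have lam_nn: "lam y x \<ge> 0" for y x by (simp add: lam_def)
  have lam_pos: "lam y x \<noteq> 0 \<longleftrightarrow> dist x y < e/4" for y x by (auto simp: lam_def max_def)
  have Wpos: "Wt x > 0" if xS: "x \<in> S" for x
  proof -
    obtain y where y: "y \<in> N0" "x \<in> ball y (e/4)" using N0(3) xS by blast
    then have "y \<in> N" "lam y x > 0" by (auto simp: N_def lam_def dist_commute)
    moreover have "lam y x \<le> Wt x" unfolding Wt_def
      using \<open>y \<in> N\<close> Nfin lam_nn by (intro member_le_sum) auto
    ultimately show ?thesis by linarith
  qed
  have num_nn: "num x v \<ge> 0" for x v unfolding num_def using lam_nn by (simp add: sum_nonneg)
  have supp: "supp_w (h x) = P ` {y \<in> N. dist x y < e/4}" if "x \<in> S" for x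
  proof -
    have "h x v \<noteq> 0 \<longleftrightarrow> (\<exists>y\<in>N. P y = v \<and> dist x y < e/4)" for v
    proof -
      have "h x v \<noteq> 0 \<longleftrightarrow> num x v \<noteq> 0" using Wpos[OF that] by (simp add: h_def)
      also have "\<dots> \<longleftrightarrow> (\<exists>y\<in>{y\<in>N. P y = v}. lam y x \<noteq> 0)"
        unfolding num_def using Nfin lam_nn by (subst sum_nonneg_eq_0_iff) auto
      finally show ?thesis using lam_pos by auto
    qed
    then show ?thesis by (auto simp: supp_w_def)
  qed
  have tau: "vr_simplex (d - 1) \<delta> (P ` {y \<in> N. dist x y \<le> e/4})" 
    if "x \<in> S" "\<exists>y\<in>N. dist x y < e/4" for x
    unfolding vr_simplex_def
  proof (intro conjI)
    show "finite (P ` {y \<in> N. dist x y \<le> e / 4})" using Nfin by simp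
    show "P ` {y \<in> N. dist x y \<le> e / 4} \<noteq> {}" using that(2) by force
    show "P ` {y \<in> N. dist x y \<le> e / 4} \<subseteq> topspace (nsphere (d - 1))"
      using Pin NS by (auto simp: topspace_nsphere')
    show "\<forall>u\<in>P ` {y \<in> N. dist x y \<le> e / 4}. \<forall>v\<in>P ` {y \<in> N. dist x y \<le> e / 4}. geo_dist (d - 1) u v \<le> \<delta>"
    proof clarify
      fix a b assume "a \<in> N" "dist x a \<le> e/4" "b \<in> N" "dist x b \<le> e/4"
      then show "geo_dist (d - 1) (P a) (P b) \<le> \<delta>"
        using small[of "{y \<in> N. dist x y \<le> e/4}" x a b] NS by auto
    qed
  qed
  have active: "\<exists>y\<in>N. dist x y < e/4" if "x \<in> S" for x
    using N0(3) that by (force simp: N_def dist_commute)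
  have carrier: "h x \<in> vr_carrier (d - 1) \<delta>" if xS: "x \<in> S" for x
    unfolding vr_carrier_def
  proof (intro CollectI conjI allI)
    have sub: "P ` {y \<in> N. dist x y < e/4} \<subseteq> P ` {y \<in> N. dist x y \<le> e/4}" by auto
    have "vr_simplex (d - 1) \<delta> (P ` {y \<in> N. dist x y \<le> e/4})" using tau[OF xS active[OF xS]] .
    then show "vr_simplex (d - 1) \<delta> (supp_w (h x))"
      unfolding supp[OF xS] vr_simplex_def using sub active[OF xS]
      by (auto intro: finite_subset)
    show "0 \<le> h x v" for v using num_nn Wpos[OF xS] by (simp add: h_def)
    have "sum (h x) (supp_w (h x)) = sum (h x) (P ` N)"
      by (rule sum.mono_neutral_left) (use Nfin supp[OF xS] in \<open>auto simp: supp_w_def\<close>)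
    also have "\<dots> = (\<Sum>v\<in>P ` N. num x v) / Wt x"
      by (simp add: h_def sum_divide_distrib)
    also have "(\<Sum>v\<in>P ` N. num x v) = Wt x"
      unfolding num_def Wt_def by (rule sum.group) (use Nfin in auto)
    finally show "sum (h x) (supp_w (h x)) = 1" using Wpos[OF xS] by simp
  qed
  have cont: "continuous_on S (\<lambda>x. h x v)" for v
  proof -
    have cl: "continuous_on S (\<lambda>x. lam y x)" for y
      unfolding lam_def by (intro continuous_on_max continuous_on_const continuous_on_diff continuous_on_dist continuous_on_id)
    have "continuous_on S (\<lambda>x. num x v)" unfolding num_def by (intro continuous_on_sum cl)
    moreover have "continuous_on S Wt" unfolding Wt_def by (intro continuous_on_sum cl)
    ultimately show ?thesis unfolding h_def using Wpos by (intro continuous_on_divide) (auto, fastforce)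
  qed
  have loc: "\<exists>W \<tau>. open W \<and> x\<in>W \<and> vr_simplex (d - 1) \<delta> \<tau> \<and> (\<forall>x'\<in>W\<inter>S. supp_w (h x') \<subseteq> \<tau>)"
    if xS: "x \<in> S" for x
  proof -
    define F where "F = (\<lambda>y. dist x y - e/4) ` {y\<in>N. dist x y > e/4}"
    define \<rho> where "\<rho> = Min (insert 1 F)"
    have Ffin: "finite F" using Nfin by (simp add: F_def)
    have rho: "\<rho> > 0" unfolding \<rho>_def using Ffin by (auto simp: F_def)
    have rho2: "dist x y \<ge> e/4 + \<rho>" if "y \<in> N" "dist x y > e/4" for y
    proof -
      have "\<rho> \<le> dist x y - e/4" unfolding \<rho>_def using Ffin that by (intro Min_le) (auto simp: F_def)
      then show ?thesis by simp
    qed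
    show ?thesis
    proof (intro exI conjI)
      show "open (ball x \<rho>)" by simp
      show "x \<in> ball x \<rho>" using rho by simp
      show "vr_simplex (d - 1) \<delta> (P ` {y \<in> N. dist x y \<le> e/4})" using tau[OF xS active[OF xS]] .
      show "\<forall>x'\<in>ball x \<rho> \<inter> S. supp_w (h x') \<subseteq> P ` {y \<in> N. dist x y \<le> e/4}"
      proof clarify
        fix x' v assume x': "x' \<in> ball x \<rho>" "x' \<in> S" and v: "v \<in> supp_w (h x')"
        then obtain y where y: "y \<in> N" "dist x' y < e/4" "v = P y" using supp by auto
        have "dist x y \<le> dist x x' + dist x' y" by (rule dist_triangle)
        then have "dist x y < \<rho> + e/4" using x'(1) y(2) by simp
        then have "dist x y \<le> e/4" using rho2[OF y(1)] by force
        then show "v \<in> P ` {y \<in> N. dist x y \<le> e/4}" using y by auto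
      qed
    qed
  qed
  have hc: "continuous_map (nsphere k) (vr_top (d - 1) \<delta>) h"
    unfolding nsphere_top S_def[symmetric]
    by (rule cont_vr[OF carrier cont loc])
  have Wt_ant: "Wt (antipode x) = Wt x" for x
  proof -
    have "Wt (antipode x) = (\<Sum>y\<in>antipode ` N. lam y (antipode x))" by (simp add: Wt_def Nant)
    also have "\<dots> = (\<Sum>y\<in>N. lam (antipode y) (antipode x))"
      by (simp add: sum.reindex[OF injA])
    also have "\<dots> = Wt x" by (simp add: Wt_def lam_def)
    finally show ?thesis .
  qed
  have num_ant: "num (antipode x) v = num x (antipode v)" for x v
  proof -
    have im: "antipode ` {y\<in>N. P y = antipode v} = {y\<in>N. P y = v}"
    proof
      show "antipode ` {y\<in>N. P y = antipode v} \<subseteq> {y\<in>N. P y = v}"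
      proof
        fix z assume "z \<in> antipode ` {y\<in>N. P y = antipode v}"
        then obtain y where y: "y \<in> N" "P y = antipode v" "z = antipode y" by blast
        have "z \<in> N" using y Nant by blast
        moreover have "P z = v" using y NS Pant by (metis antipode_antipode subsetD)
        ultimately show "z \<in> {y\<in>N. P y = v}" by blast
      qed
      show "{y\<in>N. P y = v} \<subseteq> antipode ` {y\<in>N. P y = antipode v}"
      proof
        fix y assume y: "y \<in> {y\<in>N. P y = v}"
        then have "antipode y \<in> N" using Nant by auto
        moreover have "P (antipode y) = antipode v" using y NS Pant by auto
        ultimately show "y \<in> antipode ` {y\<in>N. P y = antipode v}"
          by (metis (mono_tags, lifting) antipode_antipode image_eqI mem_Collect_eq)
      qed
    qed
    have "num (antipode x) v = (\<Sum>y\<in>antipode ` {y\<in>N. P y = antipode v}. lam y (antipode x))"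
      by (simp add: num_def im)
    also have "\<dots> = (\<Sum>y\<in>{y\<in>N. P y = antipode v}. lam (antipode y) (antipode x))"
      by (simp add: sum.reindex[OF injA])
    also have "\<dots> = num x (antipode v)" by (simp add: num_def lam_def)
    finally show ?thesis .
  qed
  have "\<forall>x\<in>topspace (nsphere k). h (antipode x) = vr_antipode (h x)"
    by (simp add: h_def vr_antipode_def fun_eq_iff num_ant Wt_ant)
  then show ?thesis using hc by blast
qed


lemma geo_dist_le_pi:
  assumes "u \<in> Sph n" "v \<in> Sph n"
  shows "geo_dist n u v \<le> pi"
proof -
  have "\<bar>\<Sum>i\<le>n. u i * v i\<bar> \<le> (\<Sum>i\<le>n. \<bar>u i * v i\<bar>)" by (rule sum_abs)
  also have "\<dots> \<le> (\<Sum>i\<le>n. ((u i)\<^sup>2 + (v i)\<^sup>2) / 2)"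
  proof (rule sum_mono)
    fix i
    have "0 \<le> (\<bar>u i\<bar> - \<bar>v i\<bar>)\<^sup>2" by simp
    then show "\<bar>u i * v i\<bar> \<le> ((u i)\<^sup>2 + (v i)\<^sup>2) / 2"
      by (simp add: power2_eq_square abs_mult algebra_simps)
  qed
  also have "\<dots> = ((\<Sum>i\<le>n. (u i)\<^sup>2) + (\<Sum>i\<le>n. (v i)\<^sup>2)) / 2"
    by (simp add: sum.distrib flip: sum_divide_distrib)
  also have "\<dots> = 1" using assms by (simp add: Sph_def)
  finally have "\<bar>\<Sum>i\<le>n. u i * v i\<bar> \<le> 1" .
  then show ?thesis unfolding geo_dist_def by (intro arccos_ubound) auto
qed

theorem theorem3p5:
  fixes X :: "'a topology" and d k :: nat and f :: "'a \<Rightarrow> nat \<Rightarrow> real"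
  assumes "d \<ge> 1"
    and "is_coind_Conf2 X k"
    and "k \<ge> d - 1"
    and "\<forall>x\<in>topspace X. \<forall>i\<ge>d. f x i = 0"
    and "inj_on f (topspace X)"
  shows "alpha X d f \<ge> c_const (d - 1) k"
proof -
  define D where "D = {\<delta>. \<delta> \<ge> 0 \<and>
     (\<forall>p\<in>topspace (Conf2 X). \<exists>U. openin (Conf2 X) U \<and> p \<in> U \<and>
        (\<forall>a\<in>U. \<forall>b\<in>U. geo_dist (d - 1) (Phi d f a) (Phi d f b) \<le> \<delta>))}"
  define C where "C = {r. r \<ge> 0 \<and>
     (\<exists>g. continuous_map (nsphere k) (vr_top (d - 1) r) g \<and>
          (\<forall>x\<in>topspace (nsphere k). g (antipode x) = vr_antipode (g x)))}"
  have alpha_eq: "alpha X d f = Inf D" by (simp add: alpha_def delta_mod_def D_def)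
  have c_eq: "c_const (d - 1) k = Inf C" by (simp add: c_const_def C_def)
  have tC: "topspace (Conf2 X) = {(a, b). a \<in> topspace X \<and> b \<in> topspace X \<and> a \<noteq> b}"
    by (auto simp: Conf2_def topspace_subtopology topspace_prod_topology)
  have PS: "Phi d f p \<in> Sph (d - 1)" if pC: "p \<in> topspace (Conf2 X)" for p
  proof -
    obtain a b where "p = (a, b)" "a \<in> topspace X" "b \<in> topspace X" "a \<noteq> b"
      using pC tC by auto
    then show ?thesis using Phi_Sph[OF assms(1) _ _ _ assms(4,5)] by simp
  qed
  have "pi \<in> D"
    unfolding D_def
  proof (intro CollectI conjI ballI)
    show "0 \<le> pi" by simp
    fix p assume "p \<in> topspace (Conf2 X)"
    then show "\<exists>U. openin (Conf2 X) U \<and> p \<in> U \<and>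
        (\<forall>a\<in>U. \<forall>b\<in>U. geo_dist (d - 1) (Phi d f a) (Phi d f b) \<le> pi)"
      using geo_dist_le_pi[OF PS PS] by (intro exI[of _ "topspace (Conf2 X)"]) auto
  qed
  then have Dne: "D \<noteq> {}" by blast
  obtain g where g: "continuous_map (nsphere k) (Conf2 X) g"
    "\<forall>x\<in>topspace (nsphere k). g (antipode x) = swap2 (g x)"
    using assms(2) by (auto simp: is_coind_Conf2_def equiv_map_to_Conf2_def)
  have "Inf C \<le> \<delta>" if "\<delta> \<in> D" for \<delta>
  proof (rule cInf_lower)
    have cov: "\<forall>p\<in>topspace (Conf2 X). \<exists>U. openin (Conf2 X) U \<and> p \<in> U \<and>
        (\<forall>a\<in>U. \<forall>b\<in>U. geo_dist (d - 1) (Phi d f a) (Phi d f b) \<le> \<delta>)" and "\<delta> \<ge> 0"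
      using that by (auto simp: D_def)
    then show "\<delta> \<in> C"
      using main_construct[OF assms(1,4,5) g(1) g(2) cov] by (simp add: C_def)
    show "bdd_below C" unfolding C_def by (rule bdd_belowI[of _ 0]) auto
  qed
  then have "Inf C \<le> Inf D" using Dne by (intro cInf_greatest) auto
  then show ?thesis unfolding alpha_eq c_eq .
qed

end
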